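(* Let $m\ge 8$ be an even integer. There do not exist a graph $G=(V,E)$ with $|V|=m$ and a function $h:E\to\{0,1\}$ such that simultaneously (1) there are at least $\dfrac{2^m}{2^{\lceil\log_2 m\rceil}}$ colourings of $G$ according to $h$, and (2) $G$ contains a connected component with more than $\frac{m}{2}$ vertices.
   Context: Given a graph $G=(V,E)$ and a function $h:E\to\{0,1\}$, a colouring of $G$ according to $h$ is a function $c:V\to\{0,1\}$ such that $c(u)\oplus c(v)=h(\{u,v\})$ for every edge $\{u,v\}\in E$. A connected component of a graph is a nonempty maximal connected induced subgraph; its cardinality is its number of vertices. *)

theory Defs
  imports Main "HOL-Library.FuncSet" Complex_Main
begin

definition simple_graph :: "'a set \<Rightarrow> 'a set set \<Rightarrow> bool" where
  "simple_graph V E \<longleftrightarrow> finite V \<and>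
     (\<forall>e\<in>E. \<exists>u v. u \<in> V \<and> v \<in> V \<and> u \<noteq> v \<and> e = {u, v})"

text \<open>Colourings c : V -> {0,1} according to h : E -> {0,1}; we encode {0,1} as bool,
  so XOR is inequality. Colourings are extensional functions on V.\<close>
definition colourings :: "'a set \<Rightarrow> 'a set set \<Rightarrow> ('a set \<Rightarrow> bool) \<Rightarrow> ('a \<Rightarrow> bool) set" where
  "colourings V E h = {c \<in> V \<rightarrow>\<^sub>E (UNIV :: bool set).
      \<forall>u v. {u, v} \<in> E \<longrightarrow> (c u \<noteq> c v) = h {u, v}}"

definition connected_induced :: "'a set set \<Rightarrow> 'a set \<Rightarrow> bool" where
  "connected_induced E D \<longleftrightarrow>
     (\<forall>u\<in>D. \<forall>v\<in>D. (\<lambda>x y. x \<in> D \<and> y \<in> D \<and> {x, y} \<in> E)\<^sup>*\<^sup>* u v)"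

definition connected_component :: "'a set \<Rightarrow> 'a set set \<Rightarrow> 'a set \<Rightarrow> bool" where
  "connected_component V E C \<longleftrightarrow> C \<subseteq> V \<and> C \<noteq> {} \<and> connected_induced E C \<and>
     (\<forall>D. C \<subset> D \<and> D \<subseteq> V \<longrightarrow> \<not> connected_induced E D)"

end

theory Submission
  imports Defs
begin

lemma col_inj:
  assumes c1: "c1 \<in> colourings V E h" and c2: "c2 \<in> colourings V E h"
    and ci: "connected_induced E C" and CV: "C \<subseteq> V" and r: "r \<in> C"
    and eq: "\<forall>x\<in>insert r (V - C). c1 x = c2 x"
  shows "c1 = c2"
proof
  fix v
  show "c1 v = c2 v"
  proof (cases "v \<in> V")
    case False
    then show ?thesis using c1 c2 unfolding colourings_def by (auto simp: PiE_def extensional_def)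
  next
    case True
    show ?thesis
    proof (cases "v \<in> C")
      case False
      then show ?thesis using eq True by auto
    next
      case vC: True
      have path: "(\<lambda>x y. x \<in> C \<and> y \<in> C \<and> {x, y} \<in> E)\<^sup>*\<^sup>* r v"
        using ci r vC unfolding connected_induced_def by blast
      have "c1 v = c2 v" using path
      proof (induction rule: rtranclp_induct)
        case base then show ?case using eq by auto
      next
        case (step y z)
        then have e: "{y, z} \<in> E" by auto
        have "(c1 y \<noteq> c1 z) = h {y, z}" "(c2 y \<noteq> c2 z) = h {y, z}"
          using c1 c2 e unfolding colourings_def by auto
        then show ?case using step.IH by auto
      qed
      then show ?thesis .
    qed
  qed
qed

lemma card_col:
  assumes fin: "finite V" and ci: "connected_induced E C" and CV: "C \<subseteq> V" and r: "r \<in> C"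
  shows "card (colourings V E h) \<le> 2 ^ card (insert r (V - C))"
proof -
  let ?S = "insert r (V - C)"
  have "inj_on (\<lambda>c. restrict c ?S) (colourings V E h)"
  proof (rule inj_onI)
    fix a b assume a: "a \<in> colourings V E h" and b: "b \<in> colourings V E h"
      and "restrict a ?S = restrict b ?S"
    then have "\<forall>x\<in>?S. a x = b x" by (metis restrict_apply')
    then show "a = b" using col_inj[OF a b ci CV r] by blast
  qed
  moreover have "(\<lambda>c. restrict c ?S) ` colourings V E h \<subseteq> ?S \<rightarrow>\<^sub>E (UNIV :: bool set)"
    by auto
  moreover have "finite ?S" using fin by auto
  ultimately have "card (colourings V E h) \<le> card (?S \<rightarrow>\<^sub>E (UNIV :: bool set))"
    by (metis card_image card_mono finite_PiE finite_UNIV)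
  also have "\<dots> = 2 ^ card ?S" using \<open>finite ?S\<close> by (simp add: card_PiE)
  finally show ?thesis .
qed

lemma pow_bound: "n \<ge> 4 \<Longrightarrow> 2 * n \<le> (2::nat) ^ (n - 1)"
proof (induction n rule: dec_induct)
  case base then show ?case by simp
next
  case (step n)
  then have "2 ^ (Suc n - 1) = 2 * (2::nat) ^ (n - 1)"
  proof -
    obtain k where "n = Suc k" using step.hyps by (cases n) auto
    then show ?thesis by simp
  qed
  then show ?case using step by simp
qed

theorem theorem2:
  fixes m :: nat
  assumes "even m" and "m \<ge> 8"
  shows "\<not> (\<exists>(V :: 'a set) (E :: 'a set set) (h :: 'a set \<Rightarrow> bool).
             simple_graph V E \<and> card V = m \<and>
             real (card (colourings V E h)) \<ge> 2 ^ m / 2 ^ nat \<lceil>log 2 (real m)\<rceil> \<and>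
             (\<exists>C. connected_component V E C \<and> real (card C) > real m / 2))"
proof
  assume "\<exists>(V :: 'a set) (E :: 'a set set) (h :: 'a set \<Rightarrow> bool).
             simple_graph V E \<and> card V = m \<and>
             real (card (colourings V E h)) \<ge> 2 ^ m / 2 ^ nat \<lceil>log 2 (real m)\<rceil> \<and>
             (\<exists>C. connected_component V E C \<and> real (card C) > real m / 2)"
  then obtain V :: "'a set" and E h C where sg: "simple_graph V E" and cV: "card V = m"
    and big: "real (card (colourings V E h)) \<ge> 2 ^ m / 2 ^ nat \<lceil>log 2 (real m)\<rceil>"
    and cc: "connected_component V E C" and cC: "real (card C) > real m / 2" by blast
  obtain n where mn: "m = 2 * n" using assms(1) by blast
  have n4: "n \<ge> 4" using assms(2) mn by simp
  have fin: "finite V" using sg unfolding simple_graph_def by simp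
  have CV: "C \<subseteq> V" and Cne: "C \<noteq> {}" and ci: "connected_induced E C"
    using cc unfolding connected_component_def by auto
  obtain r where r: "r \<in> C" using Cne by blast
  have finC: "finite C" using fin CV finite_subset by blast
  have cCn: "card C \<ge> n + 1" using cC mn by simp
  have "card (insert r (V - C)) \<le> Suc (card (V - C))" by (simp add: card_insert_le_m1)
  also have "card (V - C) = m - card C" using card_Diff_subset[OF finC CV] cV by simp
  finally have cS: "card (insert r (V - C)) \<le> n" using cCn mn card_mono[OF fin CV] cV by linarith
  have "card (colourings V E h) \<le> 2 ^ card (insert r (V - C))"
    using card_col[OF fin ci CV r] .
  also have "\<dots> \<le> 2 ^ n" using cS by (simp add: power_increasing)
  finally have upper: "card (colourings V E h) \<le> 2 ^ n" .
  have "real m \<le> 2 ^ (n - 1)" using pow_bound[OF n4] mn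
    by (metis of_nat_le_iff of_nat_numeral of_nat_power)
  then have "log 2 (real m) \<le> real (n - 1)"
    using assms(2) by (simp add: log_le_iff le_log_iff powr_realpow)
  then have "\<lceil>log 2 (real m)\<rceil> \<le> int (n - 1)" by (simp add: ceiling_le_iff)
  then have k: "nat \<lceil>log 2 (real m)\<rceil> \<le> n - 1" by linarith
  have "(2::real) ^ nat \<lceil>log 2 (real m)\<rceil> \<le> 2 ^ (n - 1)" using k by (simp add: power_increasing)
  then have "(2::real) ^ m / 2 ^ (n - 1) \<le> 2 ^ m / 2 ^ nat \<lceil>log 2 (real m)\<rceil>"
    by (simp add: frac_le)
  moreover have "(2::real) ^ m / 2 ^ (n - 1) = 2 ^ (n + 1)"
  proof -
    have "m = (n - 1) + (n + 1)" using mn n4 by simp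
    then have "(2::real) ^ m = 2 ^ (n - 1) * 2 ^ (n + 1)" by (metis power_add)
    then show ?thesis by simp
  qed
  ultimately have "(2::real) ^ (n + 1) \<le> real (card (colourings V E h))" using big by linarith
  moreover have "real (card (colourings V E h)) \<le> (2::real) ^ n" using upper
    by (metis of_nat_le_iff of_nat_numeral of_nat_power)
  moreover have "(2::real) ^ n < 2 ^ (n + 1)" by simp
  ultimately show False by linarith
qed

end
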